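(* Let $\circ$ be a binary operation on $L$ and consider: (C1) $a\circ b=a\vee b$ for all $a,b\in L^+$; (C2) $a\circ(-a)=\mathbb{O}$ for all $a\in L$; (C3) $-(a\circ b)=(-a)\circ(-b)$ for all $a,b\in L$; (C3+) $-(a\circ b)=(-a)\circ(-b)$ for all $a,b\in L^+$. Then: (0) if $\circ$ satisfies (C1) and (C2), then $\circ$ is not associative; (1) if $\circ$ satisfies (C1), (C2), (C3), then there is no such $\circ$ for which the set $A(\circ)=\{(a,b,c)\in L^3:(a\circ b)\circ c=a\circ(b\circ c)\}$ strictly contains $A(\oplus)$, where $\oplus$ is the symmetric maximum; (2) if $\circ$ satisfies (C1) and (C3+), then $\mathbb{O}$ is a neutral element of $\circ$; if moreover $\circ$ is associative then $|a\circ(-a)|\ge|a|$ for all $a\in L$; and if moreover $\circ$ is isotone then $|a\circ(-a)|=|a|$.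
   Context: Let $(L^+,\le)$ be a totally ordered set with bottom $\mathbb{O}$ and top $\mathbb{1}\neq\mathbb{O}$. Let $L^-=\{-a:a\in L^+\}$ be a disjoint copy of $L^+$ with reversed order ($-a\le-b$ iff $b\le a$), and $L=L^+\cup L^-$ with $-\mathbb{O}$ identified with $\mathbb{O}$, totally ordered so that every element of $L^-$ lies below every element of $L^+$; $-(-a)=a$; $|a|=a$ for $a\in L^+$, $|a|=-a$ otherwise. The symmetric maximum is $a\oplus b=\mathbb{O}$ if $b=-a$, and otherwise the one of $a,b$ with larger absolute value. Isotone means $a\le a'$, $b\le b'$ imply $a\circ b\le a'\circ b'$. *)

theory Defs
  imports Main
begin

text \<open>L is represented as signed elements of L+ (a type with bottom and top).
  The element -O is identified with O by excluding Neg bot from the carrier symL.\<close>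

datatype 'a sym = Pos 'a | Neg 'a

definition symL :: "('a::order_bot) sym set" where
  "symL = range Pos \<union> {Neg a | a. a \<noteq> bot}"

fun sneg :: "('a::order_bot) sym \<Rightarrow> 'a sym" where
  "sneg (Pos a) = (if a = bot then Pos bot else Neg a)"
| "sneg (Neg a) = Pos a"

fun sabs :: "'a sym \<Rightarrow> 'a" where
  "sabs (Pos a) = a"
| "sabs (Neg a) = a"

fun sle :: "('a::linorder) sym \<Rightarrow> 'a sym \<Rightarrow> bool" where
  "sle (Pos a) (Pos b) = (a \<le> b)"
| "sle (Neg a) (Neg b) = (b \<le> a)"
| "sle (Neg a) (Pos b) = True"
| "sle (Pos a) (Neg b) = False"

definition smax :: "('a::{linorder,order_bot}) sym \<Rightarrow> 'a sym \<Rightarrow> 'a sym" where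
  "smax a b = (if b = sneg a then Pos bot else if sabs b \<le> sabs a then a else b)"

definition binop_on_L :: "(('a::order_bot) sym \<Rightarrow> 'a sym \<Rightarrow> 'a sym) \<Rightarrow> bool" where
  "binop_on_L f \<longleftrightarrow> (\<forall>a\<in>symL. \<forall>b\<in>symL. f a b \<in> symL)"

definition C1 :: "(('a::linorder) sym \<Rightarrow> 'a sym \<Rightarrow> 'a sym) \<Rightarrow> bool" where
  "C1 f \<longleftrightarrow> (\<forall>a b. f (Pos a) (Pos b) = Pos (max a b))"

definition C2 :: "(('a::order_bot) sym \<Rightarrow> 'a sym \<Rightarrow> 'a sym) \<Rightarrow> bool" where
  "C2 f \<longleftrightarrow> (\<forall>a\<in>symL. f a (sneg a) = Pos bot)"

definition C3 :: "(('a::order_bot) sym \<Rightarrow> 'a sym \<Rightarrow> 'a sym) \<Rightarrow> bool" where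
  "C3 f \<longleftrightarrow> (\<forall>a\<in>symL. \<forall>b\<in>symL. sneg (f a b) = f (sneg a) (sneg b))"

definition C3plus :: "(('a::order_bot) sym \<Rightarrow> 'a sym \<Rightarrow> 'a sym) \<Rightarrow> bool" where
  "C3plus f \<longleftrightarrow> (\<forall>a b. sneg (f (Pos a) (Pos b)) = f (sneg (Pos a)) (sneg (Pos b)))"

definition assocL :: "(('a::order_bot) sym \<Rightarrow> 'a sym \<Rightarrow> 'a sym) \<Rightarrow> bool" where
  "assocL f \<longleftrightarrow> (\<forall>a\<in>symL. \<forall>b\<in>symL. \<forall>c\<in>symL. f (f a b) c = f a (f b c))"

definition Aset :: "(('a::order_bot) sym \<Rightarrow> 'a sym \<Rightarrow> 'a sym) \<Rightarrow> ('a sym \<times> 'a sym \<times> 'a sym) set" where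
  "Aset f = {(a, b, c). a \<in> symL \<and> b \<in> symL \<and> c \<in> symL \<and> f (f a b) c = f a (f b c)}"

definition neutralL :: "(('a::order_bot) sym \<Rightarrow> 'a sym \<Rightarrow> 'a sym) \<Rightarrow> 'a sym \<Rightarrow> bool" where
  "neutralL f e \<longleftrightarrow> (\<forall>a\<in>symL. f e a = a \<and> f a e = a)"

definition isotoneL :: "(('a::{linorder,order_bot}) sym \<Rightarrow> 'a sym \<Rightarrow> 'a sym) \<Rightarrow> bool" where
  "isotoneL f \<longleftrightarrow> (\<forall>a\<in>symL. \<forall>a'\<in>symL. \<forall>b\<in>symL. \<forall>b'\<in>symL.
      sle a a' \<longrightarrow> sle b b' \<longrightarrow> sle (f a b) (f a' b'))"

end

theory Submission
  imports Defs
begin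

lemma Pos_in[simp]: "Pos x \<in> symL" by (simp add: symL_def)
lemma Neg_in[simp]: "(Neg x \<in> symL) = (x \<noteq> bot)" by (auto simp: symL_def)

lemma symL_cases: "x \<in> symL \<Longrightarrow> (\<And>a. x = Pos a \<Longrightarrow> P) \<Longrightarrow> (\<And>a. x = Neg a \<Longrightarrow> a \<noteq> bot \<Longrightarrow> P) \<Longrightarrow> P"
  by (cases x) auto

lemma part0:
  fixes f :: "('a::{linorder,order_bot,order_top}) sym \<Rightarrow> 'a sym \<Rightarrow> 'a sym"
  assumes nontriv: "(bot::'a) \<noteq> top" and c1: "C1 f" and c2: "C2 f"
  shows "\<not> assocL f"
proof
  assume a: "assocL f"
  have n: "Neg (top::'a) \<in> symL" using nontriv by simp
  have e1: "f (Neg top) (Pos top) = Pos bot" using c2 n unfolding C2_def by (metis sneg.simps(2))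
  have "f (f (Neg top) (Pos top)) (Pos top) = f (Neg top) (f (Pos top) (Pos top))"
    using a n unfolding assocL_def by simp
  then have "Pos top = Pos (bot::'a)" using c1 e1 unfolding C1_def by simp
  then show False using nontriv by simp
qed

lemma part2a:
  fixes f :: "('a::{linorder,order_bot}) sym \<Rightarrow> 'a sym \<Rightarrow> 'a sym"
  assumes c1: "C1 f" and c3: "C3plus f"
  shows "neutralL f (Pos bot)"
  unfolding neutralL_def
proof
  fix x :: "'a sym" assume "x \<in> symL"
  then show "f (Pos bot) x = x \<and> f x (Pos bot) = x"
  proof (rule symL_cases)
    fix a assume "x = Pos a" then show ?thesis using c1 unfolding C1_def by simp
  next
    fix a assume x: "x = Neg a" and a: "a \<noteq> bot"
    have "sneg (f (Pos bot) (Pos a)) = f (sneg (Pos bot)) (sneg (Pos a))"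
      "sneg (f (Pos a) (Pos bot)) = f (sneg (Pos a)) (sneg (Pos bot))"
      using c3 unfolding C3plus_def by blast+
    then show ?thesis using c1 a x unfolding C1_def by simp
  qed
qed

lemma C3plus_neg:
  fixes f :: "('a::{linorder,order_bot}) sym \<Rightarrow> 'a sym \<Rightarrow> 'a sym"
  assumes c1: "C1 f" and c3: "C3plus f" and "a \<noteq> bot" "b \<noteq> bot"
  shows "f (Neg a) (Neg b) = Neg (max a b)"
proof -
  have "sneg (f (Pos a) (Pos b)) = f (sneg (Pos a)) (sneg (Pos b))"
    using c3 unfolding C3plus_def by blast
  then show ?thesis using assms c1 unfolding C1_def by (auto simp: max_def bot.extremum_unique split: if_splits)
qed

lemma part2b:
  fixes f :: "('a::{linorder,order_bot}) sym \<Rightarrow> 'a sym \<Rightarrow> 'a sym"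
  assumes c1: "C1 f" and c3: "C3plus f" and binop: "binop_on_L f" and as: "assocL f"
  shows "\<forall>a\<in>symL. sabs a \<le> sabs (f a (sneg a))"
proof
  fix x :: "'a sym" assume "x \<in> symL"
  then show "sabs x \<le> sabs (f x (sneg x))"
  proof (rule symL_cases)
    fix a assume x: "x = Pos a"
    show ?thesis
    proof (cases "a = bot")
      case True then show ?thesis using x by simp
    next
      case False
      define c where "c = f (Pos a) (Neg a)"
      have cin: "c \<in> symL" using binop False unfolding binop_on_L_def c_def by simp
      have aa: "f (Pos a) (Pos a) = Pos a" using c1 unfolding C1_def by simp
      have nn: "f (Neg a) (Neg a) = Neg a" using C3plus_neg[OF c1 c3 False False] by simp
      have e1: "f (Pos a) c = c"
        using as False aa unfolding assocL_def c_def by (metis Neg_in Pos_in)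
      have e2: "f c (Neg a) = c"
        using as False nn unfolding assocL_def c_def by (metis Neg_in Pos_in)
      show ?thesis
      proof (rule ccontr)
        assume nle: "\<not> ?thesis"
        show False using cin
        proof (rule symL_cases)
          fix y assume "c = Pos y"
          then show False using e1 nle x False c1 unfolding C1_def c_def by (auto simp: max_def bot.extremum_unique split: if_splits)
        next
          fix y assume "c = Neg y" "y \<noteq> bot"
          then show False using e2 nle x False C3plus_neg[OF c1 c3, of y a] unfolding c_def by (auto simp: max_def bot.extremum_unique split: if_splits)
        qed
      qed
    qed
  next
    fix a assume x: "x = Neg a" and a: "a \<noteq> bot"
      define c where "c = f (Neg a) (Pos a)"
      have cin: "c \<in> symL" using binop a unfolding binop_on_L_def c_def by simp
      have aa: "f (Pos a) (Pos a) = Pos a" using c1 unfolding C1_def by simp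
      have nn: "f (Neg a) (Neg a) = Neg a" using C3plus_neg[OF c1 c3 a a] by simp
      have e1: "f (Neg a) c = c"
        using as a nn unfolding assocL_def c_def by (metis Neg_in Pos_in)
      have e2: "f c (Pos a) = c"
        using as a aa unfolding assocL_def c_def by (metis Neg_in Pos_in)
      show ?thesis
      proof (rule ccontr)
        assume nle: "\<not> ?thesis"
        show False using cin
        proof (rule symL_cases)
          fix y assume "c = Pos y"
          then show False using e2 nle x a c1 unfolding C1_def c_def by (auto simp: max_def bot.extremum_unique split: if_splits)
        next
          fix y assume "c = Neg y" "y \<noteq> bot"
          then show False using e1 nle x a C3plus_neg[OF c1 c3, of a y] unfolding c_def by (auto simp: max_def bot.extremum_unique split: if_splits)
        qed
      qed
  qed
qed

lemma sle_refl[simp]: "sle x (x::'a::linorder sym)" by (cases x) auto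

lemma sandwich: "c \<in> symL \<Longrightarrow> sle (Neg a) c \<Longrightarrow> sle c (Pos a) \<Longrightarrow> sabs c \<le> (a::'a::{linorder,order_bot})"
  by (erule symL_cases) auto

lemma part2c:
  fixes f :: "('a::{linorder,order_bot}) sym \<Rightarrow> 'a sym \<Rightarrow> 'a sym"
  assumes c1: "C1 f" and c3: "C3plus f" and binop: "binop_on_L f" and as: "assocL f"
    and iso: "isotoneL f"
  shows "\<forall>a\<in>symL. sabs (f a (sneg a)) = sabs a"
proof
  fix x :: "'a sym" assume xin: "x \<in> symL"
  have ge: "sabs x \<le> sabs (f x (sneg x))" using part2b[OF c1 c3 binop as] xin by blast
  have neu: "neutralL f (Pos bot)" using part2a[OF c1 c3] .
  have le: "sabs (f x (sneg x)) \<le> sabs x" using xin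
  proof (rule symL_cases)
    fix a assume x: "x = Pos a"
    show ?thesis
    proof (cases "a = bot")
      case True then show ?thesis using x neu unfolding neutralL_def by simp
    next
      case False
      define c where "c = f (Pos a) (Neg a)"
      have cin: "c \<in> symL" using binop False unfolding binop_on_L_def c_def by simp
      have "sle c (f (Pos a) (Pos bot))" using iso False unfolding isotoneL_def c_def
        by (metis Neg_in Pos_in sle.simps(3) sle_refl)
      then have u: "sle c (Pos a)" using neu unfolding neutralL_def by simp
      have "sle (f (Neg a) (Neg a)) c" using iso False unfolding isotoneL_def c_def
        by (metis Neg_in Pos_in sle.simps(3) sle_refl)
      then have l: "sle (Neg a) c" using C3plus_neg[OF c1 c3 False False] by simp
      show ?thesis using sandwich[OF cin l u] x False unfolding c_def by simp
    qed
  next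
    fix a assume x: "x = Neg a" and False: "a \<noteq> bot"
      define c where "c = f (Neg a) (Pos a)"
      have cin: "c \<in> symL" using binop False unfolding binop_on_L_def c_def by simp
      have "sle c (f (Pos bot) (Pos a))" using iso False unfolding isotoneL_def c_def
        by (metis Neg_in Pos_in sle.simps(3) sle_refl)
      then have u: "sle c (Pos a)" using neu unfolding neutralL_def by simp
      have "sle (f (Neg a) (Neg a)) c" using iso False unfolding isotoneL_def c_def
        by (metis Neg_in Pos_in sle.simps(3) sle_refl)
      then have l: "sle (Neg a) c" using C3plus_neg[OF c1 c3 False False] by simp
      show ?thesis using sandwich[OF cin l u] x False unfolding c_def by simp
  qed
  show "sabs (f x (sneg x)) = sabs x" using ge le by simp
qed

lemma part1_eq:
  fixes f :: "('a::{linorder,order_bot}) sym \<Rightarrow> 'a sym \<Rightarrow> 'a sym"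
  assumes c1: "C1 f" and c2: "C2 f" and c3: "C3 f" and binop: "binop_on_L f" and sub: "Aset smax \<subseteq> Aset f"
  shows "\<forall>x\<in>symL. \<forall>y\<in>symL. f x y = smax x y"
proof -
  have tr: "f (f x y) z = f x (f y z)" if "x\<in>symL" "y\<in>symL" "z\<in>symL"
      "smax (smax x y) z = smax x (smax y z)" for x y z
    using sub that unfolding Aset_def by blast
  have pp: "f (Pos a) (Pos b) = Pos (max a b)" for a b using c1 unfolding C1_def by simp
  have nn: "f (Neg a) (Neg b) = Neg (max a b)" if "a \<noteq> bot" "b \<noteq> bot" for a b
  proof -
    have "sneg (f (Pos a) (Pos b)) = f (sneg (Pos a)) (sneg (Pos b))"
      using c3 unfolding C3_def by simp
    then show ?thesis using that pp by (auto simp: max_def)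
  qed
  have on: "f (Pos bot) (Neg b) = Neg b" if "b \<noteq> bot" for b
  proof -
    have "sneg (f (Pos bot) (Pos b)) = f (sneg (Pos bot)) (sneg (Pos b))"
      using c3 unfolding C3_def by simp
    then show ?thesis using that pp by auto
  qed
  have no: "f (Neg b) (Pos bot) = Neg b" if "b \<noteq> bot" for b
  proof -
    have "sneg (f (Pos b) (Pos bot)) = f (sneg (Pos b)) (sneg (Pos bot))"
      using c3 unfolding C3_def by simp
    then show ?thesis using that pp by auto
  qed
  have z1: "f (Pos a) (Neg a) = Pos bot" if "a \<noteq> bot" for a
    using c2 that unfolding C2_def by (metis Pos_in sneg.simps(1))
  have z2: "f (Neg a) (Pos a) = Pos bot" if "a \<noteq> bot" for a
    using c2 that unfolding C2_def by (metis Neg_in sneg.simps(2))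
  have bin: "f x y \<in> symL" if "x\<in>symL" "y\<in>symL" for x y
    using binop that unfolding binop_on_L_def by blast
  have PN1: "f (Pos a) (Neg b) = Pos a" if "b < a" "b \<noteq> bot" for a b
  proof -
    have a: "a \<noteq> bot" using that by (metis bot.extremum_strict)
    have o: "b \<noteq> a" "a \<noteq> b" "\<not> a \<le> b" "b \<le> a" using that by auto
    define c where "c = f (Pos a) (Neg b)"
    have cin: "c \<in> symL" using bin that unfolding c_def by simp
    have t1: "f c (Pos b) = Pos a"
      using tr[of "Pos a" "Neg b" "Pos b"] that o a z2[of b] pp[of a bot] unfolding c_def
      by (auto simp: smax_def less_imp_le bot.extremum_unique)
    have t2: "f c (Neg a) = Pos bot"
      using tr[of "Pos a" "Neg b" "Neg a"] that o a z1[of a] nn[of b a] unfolding c_def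
      by (auto simp: smax_def max_def less_imp_le bot.extremum_unique)
    show ?thesis using cin
    proof (rule symL_cases)
      fix y assume "c = Pos y" then show ?thesis using t1 pp that unfolding c_def
        by (auto simp: max_def bot.extremum_unique split: if_splits)
    next
      fix y assume "c = Neg y" "y \<noteq> bot" then show ?thesis using t2 nn[of y a] a by simp
    qed
  qed
  have PN2: "f (Pos a) (Neg b) = Neg b" if "a < b" for a b
  proof (cases "a = bot")
    case True then show ?thesis using on that by auto
  next
    case a: False
    have b: "b \<noteq> bot" using that by (metis bot.extremum_strict)
    have o: "b \<noteq> a" "a \<noteq> b" "\<not> b \<le> a" "a \<le> b" using that by auto
    define c where "c = f (Pos a) (Neg b)"
    have cin: "c \<in> symL" using bin b unfolding c_def by simp
    have t3: "f (Neg a) c = Neg b"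
      using tr[of "Neg a" "Pos a" "Neg b"] that o a b z2[of a] on[of b] unfolding c_def
      by (auto simp: smax_def less_imp_le bot.extremum_unique)
    have t4: "f (Pos b) c = Pos bot"
      using tr[of "Pos b" "Pos a" "Neg b"] that o a b z1[of b] pp[of b a] unfolding c_def
      by (auto simp: smax_def max_def less_imp_le bot.extremum_unique)
    show ?thesis using cin
    proof (rule symL_cases)
      fix y assume "c = Pos y" then show ?thesis using t4 pp b unfolding c_def
        by (auto simp: max_def bot.extremum_unique split: if_splits)
    next
      fix y assume "c = Neg y" "y \<noteq> bot" then show ?thesis using t3 nn[of a y] a that unfolding c_def
        by (auto simp: max_def bot.extremum_unique split: if_splits)
    qed
  qed
  have NP1: "f (Neg b) (Pos a) = Pos a" if "b < a" "b \<noteq> bot" for a b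
  proof -
    have a: "a \<noteq> bot" using that by (metis bot.extremum_strict)
    have o: "b \<noteq> a" "a \<noteq> b" "\<not> a \<le> b" "b \<le> a" using that by auto
    define c where "c = f (Neg b) (Pos a)"
    have cin: "c \<in> symL" using bin that unfolding c_def by simp
    have t5: "f (Pos b) c = Pos a"
      using tr[of "Pos b" "Neg b" "Pos a"] that o a z1[of b] pp[of bot a] unfolding c_def
      by (auto simp: smax_def less_imp_le bot.extremum_unique)
    have t6: "f (Neg a) c = Pos bot"
      using tr[of "Neg a" "Neg b" "Pos a"] that o a z2[of a] nn[of a b] unfolding c_def
      by (auto simp: smax_def max_def less_imp_le bot.extremum_unique)
    show ?thesis using cin
    proof (rule symL_cases)
      fix y assume "c = Pos y" then show ?thesis using t5 pp that unfolding c_def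
        by (auto simp: max_def bot.extremum_unique split: if_splits)
    next
      fix y assume "c = Neg y" "y \<noteq> bot" then show ?thesis using t6 nn[of a y] a by simp
    qed
  qed
  have NP2: "f (Neg b) (Pos a) = Neg b" if "a < b" for a b
  proof (cases "a = bot")
    case True then show ?thesis using no that by auto
  next
    case a: False
    have b: "b \<noteq> bot" using that by (metis bot.extremum_strict)
    have o: "b \<noteq> a" "a \<noteq> b" "\<not> b \<le> a" "a \<le> b" using that by auto
    define c where "c = f (Neg b) (Pos a)"
    have cin: "c \<in> symL" using bin b unfolding c_def by simp
    have t7: "f c (Neg a) = Neg b"
      using tr[of "Neg b" "Pos a" "Neg a"] that o a b z1[of a] no[of b] unfolding c_def
      by (auto simp: smax_def less_imp_le bot.extremum_unique)
    have t8: "f c (Pos b) = Pos bot"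
      using tr[of "Neg b" "Pos a" "Pos b"] that o a b z2[of b] pp[of a b] unfolding c_def
      by (auto simp: smax_def max_def less_imp_le bot.extremum_unique)
    show ?thesis using cin
    proof (rule symL_cases)
      fix y assume "c = Pos y" then show ?thesis using t8 pp b unfolding c_def
        by (auto simp: max_def bot.extremum_unique split: if_splits)
    next
      fix y assume "c = Neg y" "y \<noteq> bot" then show ?thesis using t7 nn[of y a] a that unfolding c_def
        by (auto simp: max_def bot.extremum_unique split: if_splits)
    qed
  qed
  show ?thesis
  proof (intro ballI)
    fix x y :: "'a sym" assume x: "x \<in> symL" and y: "y \<in> symL"
    show "f x y = smax x y" using x
    proof (rule symL_cases)
      fix a assume xa: "x = Pos a"
      show ?thesis using y
      proof (rule symL_cases)
        fix b assume "y = Pos b" then show ?thesis using xa pp by (auto simp: smax_def max_def)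
      next
        fix b assume yb: "y = Neg b" "b \<noteq> bot"
        consider "a = b" | "b < a" | "a < b" by fastforce
        then show ?thesis
        proof cases
          case 1 then show ?thesis using xa yb z1 by (auto simp: smax_def)
        next
          case 2 then show ?thesis using xa yb PN1 by (auto simp: smax_def)
        next
          case 3 then show ?thesis using xa yb PN2 by (auto simp: smax_def)
        qed
      qed
    next
      fix a assume xa: "x = Neg a" "a \<noteq> bot"
      show ?thesis using y
      proof (rule symL_cases)
        fix b assume yb: "y = Pos b"
        consider "a = b" | "a < b" | "b < a" by fastforce
        then show ?thesis
        proof cases
          case 1 then show ?thesis using xa yb z2 by (auto simp: smax_def)
        next
          case 2 then show ?thesis using xa yb NP1 by (auto simp: smax_def)
        next
          case 3 then show ?thesis using xa yb NP2 by (auto simp: smax_def)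
        qed
      next
        fix b assume "y = Neg b" "b \<noteq> bot" then show ?thesis using xa nn by (auto simp: smax_def max_def)
      qed
    qed
  qed
qed


lemma part1:
  fixes f :: "('a::{linorder,order_bot}) sym \<Rightarrow> 'a sym \<Rightarrow> 'a sym"
  assumes c1: "C1 f" and c2: "C2 f" and c3: "C3 f" and binop: "binop_on_L f"
  shows "\<not> (Aset smax \<subset> Aset f)"
proof
  assume ss: "Aset smax \<subset> Aset f"
  then have eq: "\<forall>x\<in>symL. \<forall>y\<in>symL. f x y = smax x y"
    using part1_eq[OF c1 c2 c3 binop] by blast
  have "Aset f \<subseteq> Aset smax"
  proof
    fix t assume "t \<in> Aset f"
    then obtain x y z where t: "t = (x, y, z)" "x \<in> symL" "y \<in> symL" "z \<in> symL"
      "f (f x y) z = f x (f y z)" unfolding Aset_def by blast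
    have "f x y \<in> symL" "f y z \<in> symL" using binop t unfolding binop_on_L_def by blast+
    then have "smax (smax x y) z = smax x (smax y z)" using t eq by metis
    then show "t \<in> Aset smax" using t unfolding Aset_def by blast
  qed
  then show False using ss by blast
qed

theorem proposition2:
  fixes f :: "('a::{linorder,order_bot,order_top}) sym \<Rightarrow> 'a sym \<Rightarrow> 'a sym"
  assumes nontriv: "(bot::'a) \<noteq> top"
    and binop: "binop_on_L f"
  shows "(C1 f \<and> C2 f \<longrightarrow> \<not> assocL f)
    \<and> (C1 f \<and> C2 f \<and> C3 f \<longrightarrow> \<not> (Aset smax \<subset> Aset f))
    \<and> (C1 f \<and> C3plus f \<longrightarrow>
         neutralL f (Pos bot)
         \<and> (assocL f \<longrightarrow> (\<forall>a\<in>symL. sabs a \<le> sabs (f a (sneg a))))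
         \<and> (assocL f \<and> isotoneL f \<longrightarrow> (\<forall>a\<in>symL. sabs (f a (sneg a)) = sabs a)))"
  using part0[OF nontriv] part1[OF _ _ _ binop] part2a part2b[OF _ _ binop] part2c[OF _ _ binop]
  by blast

end
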